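(* Let $l\ge 1$ and let $\alpha,\beta,a,b,\gamma_1,\dots,\gamma_l,c_1,\dots,c_l$ be constants. Let $W=I+\sum_{k\ge1}w_k\lambda^{-k}$, where the $w_k$ are $2\times2$ matrix-valued functions of the variables $t_1,t_2,\dots$ and $a_1,\dots,a_l$ that do not depend on $x$. Let $U=W\sigma_3W^{-1}=\sigma_3+\sum_{k\ge1}u_k\lambda^{-k}$, and define $$B_n=\sigma_3\lambda^n+\sum_{k=0}^{n-1}u_{n-k}\lambda^k\ (n\ge1),\qquad R_n=\gamma_nI+c_n\Big(\sigma_3+\sum_{j\ge1}a_n^{-j}u_j\Big),\qquad C_n=-\frac{R_n}{\lambda-a_n},\qquad S_n=-\frac{\gamma_nI+c_n\sigma_3}{\lambda-a_n}$$ for $n=1,\dots,l$. Suppose $W$ satisfies the Sato equations $$\partial_{t_n}W=B_nW-W\sigma_3\lambda^n\ (n\ge1),\qquad \partial_{a_n}W=C_nW-WS_n\ (n=1,\dots,l).$$ Let $\Psi(\lambda)=W\Psi_0(\lambda)$ with $$\Psi_0(\lambda)=\lambda^{\alpha}(\lambda-1)^{\beta}\prod_{n=1}^l(\lambda-a_n)^{\gamma_n}e^{x\lambda}\,\mathrm{diag}\Big(\lambda^{a}(\lambda-1)^{b}\prod_{n=1}^l(\lambda-a_n)^{c_n}e^{\sum_{n\ge1}t_n\lambda^n},\ \lambda^{-a}(\lambda-1)^{-b}\prod_{n=1}^l(\lambda-a_n)^{-c_n}e^{-\sum_{n\ge1}t_n\lambda^n}\Big).$$ Then $\partial_x\Psi=\lambda\Psi$,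 $\partial_{t_n}\Psi=B_n\Psi$ for all $n\ge1$, and $\partial_{a_n}\Psi=C_n\Psi$ for $n=1,\dots,l$.
   Context: $\sigma_3=\mathrm{diag}(1,-1)$, $I$ is the $2\times 2$ identity. $W^{-1}=\sum_{k\ge0}v_k\lambda^{-k}$ denotes the inverse series, so $u_k=\sum_{j=1}^k[w_j,\sigma_3]v_{k-j}$. $\lambda$ is a spectral parameter independent of all the variables $x,t_n,a_n$. *)

theory Defs
  imports "HOL-Analysis.Analysis"
begin

type_synonym cmat = "complex^2^2"

definition sigma3 :: cmat where
  "sigma3 = (\<chi> i j. if i = j then (if i = 1 then 1 else -1) else 0)"

definition diag2 :: "complex \<Rightarrow> complex \<Rightarrow> cmat" where
  "diag2 p q = (\<chi> i j. if i = j then (if i = 1 then p else q) else 0)"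

definition smat :: "complex \<Rightarrow> cmat \<Rightarrow> cmat" where
  "smat c M = (\<chi> i j. c * M $ i $ j)"

definition mat_has_deriv :: "(complex \<Rightarrow> cmat) \<Rightarrow> cmat \<Rightarrow> complex \<Rightarrow> bool" where
  "mat_has_deriv F D s \<longleftrightarrow>
     (\<forall>i j. ((\<lambda>z. F z $ i $ j) has_field_derivative (D $ i $ j)) (at s))"

text \<open>coefficients v_k of the inverse series of W = I + sum_{k>=1} w_k lam^(-k)
  (w 0 is ignored, i.e. taken to be I): v_0 = I, v_k = - sum_{j=1}^k w_j v_(k-j)\<close>
function inv_coeffs :: "(nat \<Rightarrow> cmat) \<Rightarrow> nat \<Rightarrow> cmat" where
  "inv_coeffs w 0 = mat 1"
| "inv_coeffs w (Suc k) = - (\<Sum>j\<in>{1..Suc k}. w j ** inv_coeffs w (Suc k - j))"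
  by pat_completeness auto
termination by (relation "Wellfounded.measure (\<lambda>(w, k). k)") auto

definition U_coeffs :: "(nat \<Rightarrow> cmat) \<Rightarrow> nat \<Rightarrow> cmat" where
  "U_coeffs w k = (\<Sum>j\<in>{1..k}. (w j ** sigma3 - sigma3 ** w j) ** inv_coeffs w (k - j))"

end

theory Submission
  imports Defs
begin


lemma mat_deriv_mult:
  assumes "mat_has_deriv F DF s" "mat_has_deriv G DG s"
  shows "mat_has_deriv (\<lambda>z. F z ** G z) (DF ** G s + F s ** DG) s"
  unfolding mat_has_deriv_def
proof (intro allI)
  fix i j
  have "((\<lambda>z. \<Sum>k\<in>UNIV. F z $ i $ k * G z $ k $ j) has_field_derivative
          (\<Sum>k\<in>UNIV. DF $ i $ k * G s $ k $ j + F s $ i $ k * DG $ k $ j)) (at s)"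
    apply (rule DERIV_sum)
    using assms unfolding mat_has_deriv_def
    by (auto intro!: derivative_eq_intros)
  then show "((\<lambda>z. (F z ** G z) $ i $ j) has_field_derivative (DF ** G s + F s ** DG) $ i $ j) (at s)"
    by (simp add: matrix_matrix_mult_def sum.distrib)
qed

lemma mat_deriv_const: "mat_has_deriv (\<lambda>z. M) 0 s"
  unfolding mat_has_deriv_def by simp

lemma mat_deriv_diag2:
  assumes "(p has_field_derivative p') (at s)" "(q has_field_derivative q') (at s)"
  shows "mat_has_deriv (\<lambda>z. diag2 (p z) (q z)) (diag2 p' q') s"
  unfolding mat_has_deriv_def diag2_def using assms by (auto intro!: derivative_eq_intros)

lemma smat_diag2: "smat f (diag2 p q) = diag2 (f * p) (f * q)"
  unfolding smat_def diag2_def by (auto simp: vec_eq_iff)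

lemma mat_deriv_cong: "mat_has_deriv F D s \<Longrightarrow> (\<And>z. F z = G z) \<Longrightarrow> D = D' \<Longrightarrow> mat_has_deriv G D' s"
  by (metis ext)

lemma key_alg: "(X ** Wm - Wm ** Sm) ** P + Wm ** (Sm ** P) = X ** ((Wm::cmat) ** P)"
  by (simp add: vec_eq_iff matrix_matrix_mult_def forall_2 sum_2 algebra_simps)

lemma W_smat: "(Wm::cmat) ** smat c M = smat c (Wm ** M)"
  by (simp add: vec_eq_iff matrix_matrix_mult_def smat_def sum_distrib_left algebra_simps)

lemma sigma_diag: "smat e sigma3 ** diag2 p q = diag2 (e*p) (-(e*q))"
  by (simp add: vec_eq_iff matrix_matrix_mult_def smat_def sigma3_def diag2_def forall_2 sum_2)

lemma S_diag: "smat e (smat g (mat 1) + smat h sigma3) ** diag2 p q = diag2 (e*(g+h)*p) (e*(g-h)*q)"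
  by (simp add: vec_eq_iff matrix_matrix_mult_def smat_def sigma3_def diag2_def forall_2 sum_2 mat_def algebra_simps)


lemma prod_upd:
  fixes l :: nat
  assumes "n \<in> {1..l}"
  shows "(\<Prod>m\<in>{1..l}. f ((a(n:=s)) m) m) = f s n * (\<Prod>m\<in>{1..l}-{n}. f (a m) m)"
proof -
  have "(\<Prod>m\<in>{1..l}. f ((a(n:=s)) m) m) = f ((a(n:=s)) n) n * (\<Prod>m\<in>{1..l}-{n}. f ((a(n:=s)) m) m)"
    using assms by (subst prod.remove[of _ n]) (auto simp: finite_atLeastAtMost)
  also have "(\<Prod>m\<in>{1..l}-{n}. f ((a(n:=s)) m) m) = (\<Prod>m\<in>{1..l}-{n}. f (a m) m)"
    by (rule prod.cong) auto
  finally show ?thesis by simp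
qed

lemma sum_upd:
  fixes t :: "nat \<Rightarrow> complex"
  assumes "summable (\<lambda>k. t (Suc k) * lam ^ Suc k)" "n \<ge> 1"
  shows "(\<Sum>k. (t(n:=s)) (Suc k) * lam ^ Suc k) = (\<Sum>k. t (Suc k) * lam ^ Suc k) + (s - t n) * lam ^ n"
proof -
  have "(\<lambda>k. t (Suc k) * lam ^ Suc k + (if k = n - 1 then (s - t n) * lam ^ n else 0)) sums
        ((\<Sum>k. t (Suc k) * lam ^ Suc k) + (s - t n) * lam ^ n)"
    by (intro sums_add summable_sums assms(1)) (rule sums_single[of _ "\<lambda>_. (s - t n) * lam ^ n", simplified])
  moreover have "(\<lambda>k. t (Suc k) * lam ^ Suc k + (if k = n - 1 then (s - t n) * lam ^ n else 0))
      = (\<lambda>k. (t(n:=s)) (Suc k) * lam ^ Suc k)"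
    using assms(2) by (auto simp: fun_eq_iff algebra_simps)
  ultimately show ?thesis by (simp add: sums_iff)
qed


theorem theorem2p3:
  fixes l :: nat
    and lam \<alpha> \<beta> ac bc :: complex
    and \<gamma> c :: "nat \<Rightarrow> complex"
    and w :: "nat \<Rightarrow> (nat \<Rightarrow> complex) \<Rightarrow> (nat \<Rightarrow> complex) \<Rightarrow> cmat"
    and W :: "(nat \<Rightarrow> complex) \<Rightarrow> (nat \<Rightarrow> complex) \<Rightarrow> cmat"
    and B :: "nat \<Rightarrow> (nat \<Rightarrow> complex) \<Rightarrow> (nat \<Rightarrow> complex) \<Rightarrow> cmat"
    and R C :: "nat \<Rightarrow> (nat \<Rightarrow> complex) \<Rightarrow> (nat \<Rightarrow> complex) \<Rightarrow> cmat"
    and S :: "nat \<Rightarrow> (nat \<Rightarrow> complex) \<Rightarrow> cmat"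
    and Dom :: "((nat \<Rightarrow> complex) \<times> (nat \<Rightarrow> complex)) set"
    and Psi0 Psi :: "complex \<Rightarrow> (nat \<Rightarrow> complex) \<Rightarrow> (nat \<Rightarrow> complex) \<Rightarrow> cmat"
  assumes l: "l \<ge> 1"
  defines "W \<equiv> (\<lambda>t a. mat 1 + (\<Sum>k. smat (inverse lam ^ Suc k) (w (Suc k) t a)))"
    and "B \<equiv> (\<lambda>n t a. smat (lam ^ n) sigma3
                 + (\<Sum>k<n. smat (lam ^ k) (U_coeffs (\<lambda>j. w j t a) (n - k))))"
    and "R \<equiv> (\<lambda>n t a. smat (\<gamma> n) (mat 1)
                 + smat (c n) (sigma3 + (\<Sum>j. smat (inverse (a n) ^ Suc j)
                                              (U_coeffs (\<lambda>i. w i t a) (Suc j)))))"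
    and "C \<equiv> (\<lambda>n t a. smat (- inverse (lam - a n)) (R n t a))"
    and "S \<equiv> (\<lambda>n a. smat (- inverse (lam - a n)) (smat (\<gamma> n) (mat 1) + smat (c n) sigma3))"
    and "Dom \<equiv> {(t, a). summable (\<lambda>k. t (Suc k) * lam ^ Suc k)
                        \<and> (\<forall>n\<in>{1..l}. lam - a n \<notin> \<real>\<^sub>\<le>\<^sub>0)}"
    and "Psi0 \<equiv> (\<lambda>x t a.
           smat (lam powr \<alpha> * (lam - 1) powr \<beta> * (\<Prod>n\<in>{1..l}. (lam - a n) powr \<gamma> n) * exp (x * lam))
             (diag2
               (lam powr ac * (lam - 1) powr bc * (\<Prod>n\<in>{1..l}. (lam - a n) powr c n)
                  * exp (\<Sum>k. t (Suc k) * lam ^ Suc k))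
               (lam powr (- ac) * (lam - 1) powr (- bc) * (\<Prod>n\<in>{1..l}. (lam - a n) powr (- c n))
                  * exp (- (\<Sum>k. t (Suc k) * lam ^ Suc k)))))"
    and "Psi \<equiv> (\<lambda>x t a. W t a ** Psi0 x t a)"
  assumes sato_t: "\<And>t a n. (t, a) \<in> Dom \<Longrightarrow> n \<ge> 1 \<Longrightarrow>
      mat_has_deriv (\<lambda>s. W (t(n := s)) a) (B n t a ** W t a - W t a ** smat (lam ^ n) sigma3) (t n)"
    and sato_a: "\<And>t a n. (t, a) \<in> Dom \<Longrightarrow> n \<in> {1..l} \<Longrightarrow>
      mat_has_deriv (\<lambda>s. W t (a(n := s))) (C n t a ** W t a - W t a ** S n a) (a n)"
  shows "\<forall>x t a. (t, a) \<in> Dom \<longrightarrow>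
           mat_has_deriv (\<lambda>y. Psi y t a) (smat lam (Psi x t a)) x
         \<and> (\<forall>n\<ge>1. mat_has_deriv (\<lambda>s. Psi x (t(n := s)) a) (B n t a ** Psi x t a) (t n))
         \<and> (\<forall>n\<in>{1..l}. mat_has_deriv (\<lambda>s. Psi x t (a(n := s))) (C n t a ** Psi x t a) (a n))"
proof (intro allI impI)
  fix x t a
  assume D: "(t, a) \<in> Dom"
  have summ: "summable (\<lambda>k. t (Suc k) * lam ^ Suc k)"
    and nz: "\<And>n. n \<in> {1..l} \<Longrightarrow> lam - a n \<notin> \<real>\<^sub>\<le>\<^sub>0"
    using D by (auto simp: Dom_def)
  define K where "K = (\<lambda>a::nat\<Rightarrow>complex. lam powr \<alpha> * (lam - 1) powr \<beta> * (\<Prod>n\<in>{1..l}. (lam - a n) powr \<gamma> n))"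
  define P1 where "P1 = (\<lambda>a::nat\<Rightarrow>complex. lam powr ac * (lam - 1) powr bc * (\<Prod>n\<in>{1..l}. (lam - a n) powr c n))"
  define P2 where "P2 = (\<lambda>a::nat\<Rightarrow>complex. lam powr (- ac) * (lam - 1) powr (- bc) * (\<Prod>n\<in>{1..l}. (lam - a n) powr (- c n)))"
  define E where "E = (\<lambda>t::nat\<Rightarrow>complex. \<Sum>k. t (Suc k) * lam ^ Suc k)"
  have P0: "\<And>x t a. Psi0 x t a = diag2 (K a * exp (x * lam) * (P1 a * exp (E t)))
                                        (K a * exp (x * lam) * (P2 a * exp (- E t)))"
    by (simp add: Psi0_def K_def P1_def P2_def E_def smat_diag2)
  have h1: "mat_has_deriv (\<lambda>y. Psi y t a) (smat lam (Psi x t a)) x"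
  proof -
    have "mat_has_deriv (\<lambda>y. W t a ** diag2 (K a * exp (y * lam) * (P1 a * exp (E t)))
                                        (K a * exp (y * lam) * (P2 a * exp (- E t))))
           (0 ** diag2 (K a * exp (x * lam) * (P1 a * exp (E t))) (K a * exp (x * lam) * (P2 a * exp (- E t)))
            + W t a ** diag2 (K a * (exp (x * lam) * lam) * (P1 a * exp (E t)))
                             (K a * (exp (x * lam) * lam) * (P2 a * exp (- E t)))) x"
      by (intro mat_deriv_mult mat_deriv_const mat_deriv_diag2) (auto intro!: derivative_eq_intros)
    then show ?thesis
      by (rule mat_deriv_cong) (simp_all add: Psi_def P0 W_smat[symmetric] smat_diag2 algebra_simps)
  qed
  have h2: "\<forall>n\<ge>1. mat_has_deriv (\<lambda>s. Psi x (t(n := s)) a) (B n t a ** Psi x t a) (t n)"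
  proof (intro allI impI)
    fix n :: nat assume n: "n \<ge> 1"
    define p where "p = K a * exp (x * lam) * P1 a"
    define q where "q = K a * exp (x * lam) * P2 a"
    have Et: "\<And>s. E (t(n:=s)) = E t + (s - t n) * lam ^ n"
      unfolding E_def by (rule sum_upd[OF summ n])
    have "mat_has_deriv (\<lambda>s. W (t(n:=s)) a ** diag2 (p * exp (E t + (s - t n) * lam ^ n))
                                                  (q * exp (- (E t + (s - t n) * lam ^ n))))
           ((B n t a ** W t a - W t a ** smat (lam ^ n) sigma3) ** diag2 (p * exp (E t + (t n - t n) * lam ^ n))
                                                  (q * exp (- (E t + (t n - t n) * lam ^ n)))
            + W ((t(n := t n))) a ** diag2 (p * (exp (E t + (t n - t n) * lam ^ n) * lam ^ n))
                     (q * (exp (- (E t + (t n - t n) * lam ^ n)) * (- (lam ^ n))))) (t n)"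
      by (intro mat_deriv_mult sato_t[OF D n] mat_deriv_diag2) (auto intro!: derivative_eq_intros)
    note dv = this
    show "mat_has_deriv (\<lambda>s. Psi x (t(n := s)) a) (B n t a ** Psi x t a) (t n)"
    proof -
      have eq1: "\<And>s. W (t(n:=s)) a ** diag2 (p * exp (E t + (s - t n) * lam ^ n))
                                                  (q * exp (- (E t + (s - t n) * lam ^ n))) = Psi x (t(n := s)) a"
        by (simp add: Psi_def P0 Et p_def q_def algebra_simps)
      have "smat (lam ^ n) sigma3 ** Psi0 x t a = diag2 (p * (exp (E t) * lam ^ n)) (q * (exp (- E t) * - (lam ^ n)))"
        by (simp add: P0 sigma_diag p_def q_def algebra_simps)
      then have eq2: "(B n t a ** W t a - W t a ** smat (lam ^ n) sigma3) ** diag2 (p * exp (E t + (t n - t n) * lam ^ n))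
                                                  (q * exp (- (E t + (t n - t n) * lam ^ n)))
            + W ((t(n := t n))) a ** diag2 (p * (exp (E t + (t n - t n) * lam ^ n) * lam ^ n))
                     (q * (exp (- (E t + (t n - t n) * lam ^ n)) * (- (lam ^ n)))) = B n t a ** Psi x t a"
        using key_alg[of "B n t a" "W t a" "smat (lam ^ n) sigma3" "Psi0 x t a"]
        by (simp add: Psi_def P0 p_def q_def algebra_simps)
      show ?thesis by (rule mat_deriv_cong[OF dv eq1 eq2])
    qed
  qed
  have h3: "\<forall>n\<in>{1..l}. mat_has_deriv (\<lambda>s. Psi x t (a(n := s))) (C n t a ** Psi x t a) (a n)"
  proof
    fix n assume n: "n \<in> {1..l}"
    define Q0 where "Q0 = lam powr \<alpha> * (lam - 1) powr \<beta> * (\<Prod>m\<in>{1..l}-{n}. (lam - a m) powr \<gamma> m) * exp (x * lam)"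
    define Q1 where "Q1 = Q0 * (lam powr ac * (lam - 1) powr bc * (\<Prod>m\<in>{1..l}-{n}. (lam - a m) powr c m) * exp (E t))"
    define Q2 where "Q2 = Q0 * (lam powr (- ac) * (lam - 1) powr (- bc) * (\<Prod>m\<in>{1..l}-{n}. (lam - a m) powr (- c m)) * exp (- E t))"
    have Pa: "\<And>s. Psi0 x t (a(n:=s)) = diag2 (Q1 * ((lam - s) powr \<gamma> n * (lam - s) powr c n))
                                             (Q2 * ((lam - s) powr \<gamma> n * (lam - s) powr (- c n)))"
      unfolding P0 K_def P1_def P2_def
      unfolding prod_upd[OF n, where f="\<lambda>z m. (lam - z) powr \<gamma> m"]
          prod_upd[OF n, where f="\<lambda>z m. (lam - z) powr c m"]
          prod_upd[OF n, where f="\<lambda>z m. (lam - z) powr (- c m)"]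
      by (simp add: Q1_def Q2_def Q0_def algebra_simps)
    have an: "a(n := a n) = a" by simp
    define z where "z = lam - a n"
    have z: "z \<notin> \<real>\<^sub>\<le>\<^sub>0" using nz[OF n] by (simp add: z_def)
    then have z0: "z \<noteq> 0" by auto
    have pw: "\<And>g. z powr (g - 1) = z powr g / z"
      using z0 by (simp add: powr_diff)
    have "mat_has_deriv (\<lambda>s. W t (a(n:=s)) ** diag2 (Q1 * ((lam - s) powr \<gamma> n * (lam - s) powr c n))
                                             (Q2 * ((lam - s) powr \<gamma> n * (lam - s) powr (- c n))))
       ((C n t a ** W t a - W t a ** S n a) ** diag2 (Q1 * ((lam - a n) powr \<gamma> n * (lam - a n) powr c n))
                                             (Q2 * ((lam - a n) powr \<gamma> n * (lam - a n) powr (- c n)))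
        + W t (a(n := a n)) ** diag2
            (Q1 * ((\<gamma> n * z powr (\<gamma> n - 1) * (0 - 1)) * z powr c n + z powr \<gamma> n * (c n * z powr (c n - 1) * (0 - 1))))
            (Q2 * ((\<gamma> n * z powr (\<gamma> n - 1) * (0 - 1)) * z powr (- c n) + z powr \<gamma> n * (- c n * z powr (- c n - 1) * (0 - 1)))))
       (a n)"
      by (intro mat_deriv_mult sato_a[OF D n] mat_deriv_diag2)
         (auto intro!: derivative_eq_intros simp: z_def[symmetric] z)
    note dv = this
    show "mat_has_deriv (\<lambda>s. Psi x t (a(n := s))) (C n t a ** Psi x t a) (a n)"
    proof -
      have eq1: "\<And>s. W t (a(n:=s)) ** diag2 (Q1 * ((lam - s) powr \<gamma> n * (lam - s) powr c n))
                                             (Q2 * ((lam - s) powr \<gamma> n * (lam - s) powr (- c n))) = Psi x t (a(n := s))"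
        by (simp add: Psi_def Pa)
      have "S n a ** Psi0 x t a = diag2
            (Q1 * ((\<gamma> n * z powr (\<gamma> n - 1) * (0 - 1)) * z powr c n + z powr \<gamma> n * (c n * z powr (c n - 1) * (0 - 1))))
            (Q2 * ((\<gamma> n * z powr (\<gamma> n - 1) * (0 - 1)) * z powr (- c n) + z powr \<gamma> n * (- c n * z powr (- c n - 1) * (0 - 1))))"
        using Pa[of "a n"] unfolding an apply (simp only:)
        unfolding S_def S_diag z_def[symmetric] apply (simp add: pw z0)
        apply (rule arg_cong2[where f=diag2])
        by (simp_all add: z0 field_simps)
      then have eq2: "(C n t a ** W t a - W t a ** S n a) ** diag2 (Q1 * ((lam - a n) powr \<gamma> n * (lam - a n) powr c n))
                                             (Q2 * ((lam - a n) powr \<gamma> n * (lam - a n) powr (- c n)))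
        + W t (a(n := a n)) ** diag2
            (Q1 * ((\<gamma> n * z powr (\<gamma> n - 1) * (0 - 1)) * z powr c n + z powr \<gamma> n * (c n * z powr (c n - 1) * (0 - 1))))
            (Q2 * ((\<gamma> n * z powr (\<gamma> n - 1) * (0 - 1)) * z powr (- c n) + z powr \<gamma> n * (- c n * z powr (- c n - 1) * (0 - 1))))
         = C n t a ** Psi x t a"
        using key_alg[of "C n t a" "W t a" "S n a" "Psi0 x t a"] Pa[of "a n"] unfolding an
        by (simp add: Psi_def)
      show ?thesis by (rule mat_deriv_cong[OF dv eq1 eq2])
    qed
  qed
  show "mat_has_deriv (\<lambda>y. Psi y t a) (smat lam (Psi x t a)) x
         \<and> (\<forall>n\<ge>1. mat_has_deriv (\<lambda>s. Psi x (t(n := s)) a) (B n t a ** Psi x t a) (t n))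
         \<and> (\<forall>n\<in>{1..l}. mat_has_deriv (\<lambda>s. Psi x t (a(n := s))) (C n t a ** Psi x t a) (a n))"
    using h1 h2 h3 by blast
qed

end
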